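(* Let $r,n\ge1$, $a,b$ integers with $\gcd(a,b)=1$, and let $\lambda$ be an $(a,b;n)$-balanced partition of $rn$. Then $$\#\{(i,j)\in\lambda: d_{i,j}\text{ is invariant}\}+\#\{(i,j)\in\lambda: u_{i,j}\text{ is invariant}\}=2r.$$
   Context: Partitions are Young diagrams $\lambda\subset\mathbb{Z}_{\ge0}^2$ (finite sets with $(i,j)\in\lambda\Rightarrow(i',j')\in\lambda$ for $i'\le i$, $j'\le j$). $l(j)=\#\{i:(i,j)\in\lambda\}$, $c(i)=\#\{j:(i,j)\in\lambda\}$. Box $(i,j)$ has color $ai+bj\bmod n$; $\lambda$ is $(a,b;n)$-balanced if each residue mod $n$ is the color of exactly $r$ boxes. An arrow from $(l,s)$ to $(i',j')$ is invariant if $a(l-i')+b(s-j')\equiv0\pmod n$. For $(i,j)\in\lambda$, $d_{i,j}$ is the arrow from $(l(j),j)$ to $(i,c(i)-1)$ and $u_{i,j}$ the arrow from $(i,c(i))$ to $(l(j)-1,j)$. *)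

theory Defs
  imports Main
begin

definition young_diagram :: "(nat \<times> nat) set \<Rightarrow> bool" where
  "young_diagram lam \<longleftrightarrow> finite lam \<and>
     (\<forall>i j i' j'. (i, j) \<in> lam \<and> i' \<le> i \<and> j' \<le> j \<longrightarrow> (i', j') \<in> lam)"

definition lcol :: "(nat \<times> nat) set \<Rightarrow> nat \<Rightarrow> nat" where
  "lcol lam j = card {i. (i, j) \<in> lam}"

definition crow :: "(nat \<times> nat) set \<Rightarrow> nat \<Rightarrow> nat" where
  "crow lam i = card {j. (i, j) \<in> lam}"

definition color :: "int \<Rightarrow> int \<Rightarrow> int \<Rightarrow> nat \<times> nat \<Rightarrow> int" where
  "color a b n p = (a * int (fst p) + b * int (snd p)) mod n"

definition balanced :: "int \<Rightarrow> int \<Rightarrow> nat \<Rightarrow> nat \<Rightarrow> (nat \<times> nat) set \<Rightarrow> bool" where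
  "balanced a b n r lam \<longleftrightarrow>
     (\<forall>k::int. 0 \<le> k \<and> k < int n \<longrightarrow> card {p \<in> lam. color a b (int n) p = k} = r)"

definition invariant_arrow :: "int \<Rightarrow> int \<Rightarrow> nat \<Rightarrow> int \<times> int \<Rightarrow> int \<times> int \<Rightarrow> bool" where
  "invariant_arrow a b n src tgt \<longleftrightarrow>
     (a * (fst src - fst tgt) + b * (snd src - snd tgt)) mod int n = 0"

definition d_arrow :: "(nat \<times> nat) set \<Rightarrow> nat \<Rightarrow> nat \<Rightarrow> (int \<times> int) \<times> (int \<times> int)" where
  "d_arrow lam i j = ((int (lcol lam j), int j), (int i, int (crow lam i) - 1))"

definition u_arrow :: "(nat \<times> nat) set \<Rightarrow> nat \<Rightarrow> nat \<Rightarrow> (int \<times> int) \<times> (int \<times> int)" where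
  "u_arrow lam i j = ((int i, int (crow lam i)), (int (lcol lam j) - 1, int j))"

end

theory Submission
  imports Defs "HOL-Library.Real_Mod"
begin


locale chr =
  fixes E :: "int \<Rightarrow> 'a::comm_ring_1"
  assumes E_add: "E (u + v) = E u * E v" and E0: "E 0 = 1"
begin

lemma Eeq: "x = y + z \<Longrightarrow> E x = E y * E z"
  using E_add by simp

lemma lin: "(x::'a) - y = c * (u - v) \<Longrightarrow> u = v \<Longrightarrow> x = y"
  by simp

lemma TA:
  assumes "i \<le> n"
  shows "E (a*(int n - int i)) = 1 + (E a - 1) * (\<Sum>k\<in>{i..<n}. E (a*(int k - int i)))"
  using assms
proof (induction n rule: dec_induct)
  case base
  then show ?case by (simp add: E0)
next
  case (step n)
  have e: "E (a*(int (Suc n) - int i)) = E a * E (a*(int n - int i))"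
    by (rule Eeq) (simp add: algebra_simps)
  show ?case using step(1) step(3)
    by (simp only: e sum.atLeastLessThan_Suc) (simp add: algebra_simps)
qed

lemma TB:
  assumes "i < n"
  shows "E (a*(int i + 1 - int n)) = 1 + (1 - E a) * (\<Sum>k\<in>{i<..<n}. E (a*(int i - int k)))"
proof -
  have "Suc i \<le> n" using assms by simp
  then show ?thesis
  proof (induction n rule: dec_induct)
    case base
    have "{i<..<Suc i} = {}" by auto
    then show ?case by (simp add: E0)
  next
    case (step n)
    have e: "E (a*(int i + 1 - int n)) = E a * E (a*(int i + 1 - int (Suc n)))"
      by (rule Eeq) (simp add: algebra_simps)
    have e2: "E (a*(int i - int n)) = E (a*(int i + 1 - int (Suc n)))"
      by (rule arg_cong[where f=E]) simp
    have s: "{i<..<Suc n} = insert n {i<..<n}" using step(1) by auto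
    have s2: "(\<Sum>k\<in>{i<..<Suc n}. E (a*(int i - int k))) = E (a*(int i - int n)) + (\<Sum>k\<in>{i<..<n}. E (a*(int i - int k)))"
      unfolding s by (subst sum.insert) auto
    show ?case using step(3) unfolding s2 e2 
      by (simp only: e) (simp add: algebra_simps)
  qed
qed

lemma TC:
  "(1 - E b) * (\<Sum>j<c. E (- (b * int j))) = E (b * (1 - int c)) - E b"
proof (induction c)
  case 0
  then show ?case by simp
next
  case (Suc c)
  have e: "E (b * (1 - int c)) = E b * E (- (b * int c))"
    by (rule Eeq) (simp add: algebra_simps)
  have e2: "E (b * (1 - int (Suc c))) = E (- (b * int c))"
    by (rule arg_cong[where f=E]) (simp add: algebra_simps)
  show ?case using Suc by (simp only: e e2 sum.lessThan_Suc) (simp add: algebra_simps)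
qed

lemma TC':
  "(1 - E b) * (\<Sum>j<c. E (b * int j)) = 1 - E (b * int c)"
proof (induction c)
  case 0
  then show ?case by (simp add: E0)
next
  case (Suc c)
  have e: "E (b * int (Suc c)) = E b * E (b * int c)"
    by (rule Eeq) (simp add: algebra_simps)
  show ?case 
    apply (rule lin[where c="1", OF _ Suc])
    by (simp only: e sum.lessThan_Suc) (simp add: algebra_simps)
qed

lemma TD1:
  "(E a - 1) * (\<Sum>i\<le>k. E (a * (int k - int i))) = E (a * (int k + 1)) - 1"
proof -
  have "(\<Sum>i\<le>k. E (a * (int k - int i))) = (\<Sum>i\<in>{0..<Suc k}. E (a * (int (Suc k) - int 0)) * 0 + E (a * (int k - int i)))"
    by (simp add: atLeast0LessThan lessThan_Suc_atMost)
  have "E (a * (int k + 1)) = E (a*(int (Suc k) - int 0))"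
    by (rule arg_cong[where f=E]) simp
  also have "\<dots> = 1 + (E a - 1) * (\<Sum>i\<in>{0..<Suc k}. E (a*(int i - int 0)))"
    using TA[of 0 "Suc k" a] by blast
  finally have "E (a * (int k + 1)) = 1 + (E a - 1) * (\<Sum>i\<in>{0..<Suc k}. E (a*(int i - int 0)))" .
  moreover have "(\<Sum>i\<in>{0..<Suc k}. E (a*(int i - int 0))) = (\<Sum>i\<le>k. E (a * (int k - int i)))"
  proof -
    have "(\<Sum>i\<le>k. E (a * (int k - int i))) = (\<Sum>i\<le>k. E (a * (int (k + 0 - i))))"
      by (rule sum.cong) auto
    also have "\<dots> = (\<Sum>i\<le>k. E (a * int i))"
      using sum.atLeastAtMost_rev[of "\<lambda>i. E (a * int i)" 0 k] by (simp add: atLeast0AtMost)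
    finally show ?thesis by (simp add: atLeast0LessThan lessThan_Suc_atMost)
  qed
  ultimately show ?thesis by simp
qed

lemma TD2:
  "(1 - E a) * (\<Sum>k<i. E (a * (int k - int i))) = E (- (a * int i)) - 1"
proof (induction i)
  case 0
  then show ?case by (simp add: E0)
next
  case (Suc i)
  have e: "\<And>k. E (a * (int k - int (Suc i))) = E (-a) * E (a * (int k - int i))"
    by (rule Eeq) (simp add: algebra_simps)
  have e2: "E (- (a * int (Suc i))) = E (-a) * E (- (a * int i))"
    by (rule Eeq) (simp add: algebra_simps)
  have e3: "E (a * (int i - int i)) = 1" by (simp add: E0)
  have "(1 - E a) * (\<Sum>k<Suc i. E (a * (int k - int (Suc i)))) = E (-a) * ((1 - E a) * (\<Sum>k<i. E (a * (int k - int i))) + (1 - E a))"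
    by (simp only: e sum.lessThan_Suc e3 sum_distrib_left[symmetric]) (simp add: algebra_simps)
  also have "\<dots> = E (-a) * (E (- (a * int i)) - E a)" using Suc by simp
  also have "\<dots> = E (- (a * int (Suc i))) - 1"
  proof -
    have "E (-a) * E a = 1" using Eeq[of 0 "-a" a] E0 by simp
    then show ?thesis by (simp only: e2) (simp add: algebra_simps)
  qed
  finally show ?case .
qed

end


locale rows =
  fixes c l :: "nat \<Rightarrow> nat" and L :: nat
  assumes H1: "k < l j \<longleftrightarrow> (k < L \<and> j < c k)"
begin

lemma memc: "i < L \<Longrightarrow> j < c i \<Longrightarrow> j < c 0"
  using H1[of i j] H1[of 0 j] by auto

lemma anti: "i \<le> k \<Longrightarrow> k < L \<Longrightarrow> j < c k \<Longrightarrow> j < c i"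
  using H1[of k j] H1[of i j] by auto

lemma row_filter: "i < L \<Longrightarrow> {..<c i} = {j \<in> {..<c 0}. j < c i}"
  using memc by auto

lemma R_D:
  "(\<Sum>i<L. \<Sum>j<c i. \<Sum>k\<in>{i..<l j}. g i j k) = (\<Sum>k<L. \<Sum>i\<in>{..k}. \<Sum>j<c k. g i j k)"
proof -
  let ?M = "c 0"
  let ?Z = "\<lambda>i j k. if i \<le> k \<and> j < c k then g i j k else 0"
  have "(\<Sum>i<L. \<Sum>j<c i. \<Sum>k\<in>{i..<l j}. g i j k) = (\<Sum>i<L. \<Sum>j<?M. \<Sum>k<L. ?Z i j k)"
  proof (rule sum.cong[OF refl])
    fix i assume i: "i \<in> {..<L}"
    have "(\<Sum>j<c i. \<Sum>k\<in>{i..<l j}. g i j k) = (\<Sum>j<c i. \<Sum>k<L. ?Z i j k)"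
    proof (rule sum.cong[OF refl])
      fix j assume j: "j \<in> {..<c i}"
      have eq: "{i..<l j} = {k \<in> {..<L}. i \<le> k \<and> j < c k}" using H1 by auto
      show "(\<Sum>k\<in>{i..<l j}. g i j k) = (\<Sum>k<L. ?Z i j k)"
        unfolding eq by (rule sum.inter_filter) simp
    qed
    also have "\<dots> = (\<Sum>j<?M. if j < c i then (\<Sum>k<L. ?Z i j k) else 0)"
      using row_filter[of i] i by (simp add: sum.inter_filter[symmetric])
    also have "\<dots> = (\<Sum>j<?M. \<Sum>k<L. ?Z i j k)"
    proof (intro sum.cong refl)
      fix j
      show "(if j < c i then (\<Sum>k<L. ?Z i j k) else 0) = (\<Sum>k<L. ?Z i j k)"
      proof (cases "j < c i")
        case False
        have "\<And>k. k \<in> {..<L} \<Longrightarrow> ?Z i j k = 0"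
          using False anti[of i _ j] by fastforce
        then show ?thesis using False by simp
      qed simp
    qed
    finally show "(\<Sum>j<c i. \<Sum>k\<in>{i..<l j}. g i j k) = (\<Sum>j<?M. \<Sum>k<L. ?Z i j k)" .
  qed
  also have "\<dots> = (\<Sum>i<L. \<Sum>k<L. \<Sum>j<?M. ?Z i j k)"
    by (rule sum.cong[OF refl], rule sum.swap)
  also have "\<dots> = (\<Sum>k<L. \<Sum>i<L. \<Sum>j<?M. ?Z i j k)"
    by (rule sum.swap)
  also have "\<dots> = (\<Sum>k<L. \<Sum>i\<in>{..k}. \<Sum>j<c k. g i j k)"
  proof (rule sum.cong[OF refl])
    fix k assume k: "k \<in> {..<L}"
    have "(\<Sum>i<L. \<Sum>j<?M. ?Z i j k) = (\<Sum>i<L. if i \<le> k then (\<Sum>j<c k. g i j k) else 0)"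
    proof (rule sum.cong[OF refl])
      fix i assume i: "i \<in> {..<L}"
      show "(\<Sum>j<?M. ?Z i j k) = (if i \<le> k then (\<Sum>j<c k. g i j k) else 0)"
      proof (cases "i \<le> k")
        case True
        have "(\<Sum>j<?M. ?Z i j k) = (\<Sum>j<?M. if j < c k then g i j k else 0)"
          using True by simp
        also have "\<dots> = (\<Sum>j\<in>{j \<in> {..<?M}. j < c k}. g i j k)"
          by (rule sum.inter_filter[symmetric]) simp
        also have "{j \<in> {..<?M}. j < c k} = {..<c k}" using row_filter[of k] k by simp
        finally show ?thesis using True by simp
      qed simp
    qed
    also have "\<dots> = (\<Sum>i\<in>{i\<in>{..<L}. i \<le> k}. \<Sum>j<c k. g i j k)"
      by (rule sum.inter_filter[symmetric]) simp
    also have "{i\<in>{..<L}. i \<le> k} = {..k}" using k by auto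
    finally show "(\<Sum>i<L. \<Sum>j<?M. ?Z i j k) = (\<Sum>i\<in>{..k}. \<Sum>j<c k. g i j k)" .
  qed
  finally show ?thesis .
qed

lemma R_U:
  "(\<Sum>i<L. \<Sum>j<c i. \<Sum>k\<in>{i<..<l j}. g i j k) = (\<Sum>k<L. \<Sum>i<k. \<Sum>j<c k. g i j k)"
proof -
  let ?M = "c 0"
  let ?Z = "\<lambda>i j k. if i < k \<and> j < c k then g i j k else 0"
  have "(\<Sum>i<L. \<Sum>j<c i. \<Sum>k\<in>{i<..<l j}. g i j k) = (\<Sum>i<L. \<Sum>j<?M. \<Sum>k<L. ?Z i j k)"
  proof (rule sum.cong[OF refl])
    fix i assume i: "i \<in> {..<L}"
    have "(\<Sum>j<c i. \<Sum>k\<in>{i<..<l j}. g i j k) = (\<Sum>j<c i. \<Sum>k<L. ?Z i j k)"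
    proof (rule sum.cong[OF refl])
      fix j assume j: "j \<in> {..<c i}"
      have eq: "{i<..<l j} = {k \<in> {..<L}. i < k \<and> j < c k}" using H1 by auto
      show "(\<Sum>k\<in>{i<..<l j}. g i j k) = (\<Sum>k<L. ?Z i j k)"
        unfolding eq by (rule sum.inter_filter) simp
    qed
    also have "\<dots> = (\<Sum>j<?M. if j < c i then (\<Sum>k<L. ?Z i j k) else 0)"
      using row_filter[of i] i by (simp add: sum.inter_filter[symmetric])
    also have "\<dots> = (\<Sum>j<?M. \<Sum>k<L. ?Z i j k)"
    proof (intro sum.cong refl)
      fix j
      show "(if j < c i then (\<Sum>k<L. ?Z i j k) else 0) = (\<Sum>k<L. ?Z i j k)"
      proof (cases "j < c i")
        case False
        have "\<And>k. k \<in> {..<L} \<Longrightarrow> ?Z i j k = 0"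
          using False anti[OF less_imp_le, of i _ j] by fastforce
        then show ?thesis using False by simp
      qed simp
    qed
    finally show "(\<Sum>j<c i. \<Sum>k\<in>{i<..<l j}. g i j k) = (\<Sum>j<?M. \<Sum>k<L. ?Z i j k)" .
  qed
  also have "\<dots> = (\<Sum>i<L. \<Sum>k<L. \<Sum>j<?M. ?Z i j k)"
    by (rule sum.cong[OF refl], rule sum.swap)
  also have "\<dots> = (\<Sum>k<L. \<Sum>i<L. \<Sum>j<?M. ?Z i j k)"
    by (rule sum.swap)
  also have "\<dots> = (\<Sum>k<L. \<Sum>i<k. \<Sum>j<c k. g i j k)"
  proof (rule sum.cong[OF refl])
    fix k assume k: "k \<in> {..<L}"
    have "(\<Sum>i<L. \<Sum>j<?M. ?Z i j k) = (\<Sum>i<L. if i < k then (\<Sum>j<c k. g i j k) else 0)"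
    proof (rule sum.cong[OF refl])
      fix i assume i: "i \<in> {..<L}"
      show "(\<Sum>j<?M. ?Z i j k) = (if i < k then (\<Sum>j<c k. g i j k) else 0)"
      proof (cases "i < k")
        case True
        have "(\<Sum>j<?M. ?Z i j k) = (\<Sum>j<?M. if j < c k then g i j k else 0)"
          using True by simp
        also have "\<dots> = (\<Sum>j\<in>{j \<in> {..<?M}. j < c k}. g i j k)"
          by (rule sum.inter_filter[symmetric]) simp
        also have "{j \<in> {..<?M}. j < c k} = {..<c k}" using row_filter[of k] k by simp
        finally show ?thesis using True by simp
      qed simp
    qed
    also have "\<dots> = (\<Sum>i\<in>{i\<in>{..<L}. i < k}. \<Sum>j<c k. g i j k)"
      by (rule sum.inter_filter[symmetric]) simp
    also have "{i\<in>{..<L}. i < k} = {..<k}" using k by auto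
    finally show "(\<Sum>i<L. \<Sum>j<?M. ?Z i j k) = (\<Sum>i<k. \<Sum>j<c k. g i j k)" .
  qed
  finally show ?thesis .
qed


lemma pair_split:
  "(\<Sum>k<L. \<Sum>i<L. h k i) = (\<Sum>k<L. \<Sum>i\<in>{..k}. h k i) + (\<Sum>i<L. \<Sum>k<i. h k i)"
proof -
  have "(\<Sum>k<L. \<Sum>i<L. h k i) = (\<Sum>k<L. (\<Sum>i\<in>{..k}. h k i) + (\<Sum>i\<in>{i\<in>{..<L}. k < i}. h k i))"
  proof (rule sum.cong[OF refl])
    fix k assume k: "k \<in> {..<L}"
    have u: "{..<L} = {..k} \<union> {i\<in>{..<L}. k < i}" using k by auto
    show "(\<Sum>i<L. h k i) = (\<Sum>i\<in>{..k}. h k i) + (\<Sum>i\<in>{i\<in>{..<L}. k < i}. h k i)"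
      by (subst u, rule sum.union_disjoint) auto
  qed
  also have "\<dots> = (\<Sum>k<L. \<Sum>i\<in>{..k}. h k i) + (\<Sum>k<L. \<Sum>i\<in>{i\<in>{..<L}. k < i}. h k i)"
    by (rule sum.distrib)
  also have "(\<Sum>k<L. \<Sum>i\<in>{i\<in>{..<L}. k < i}. h k i) = (\<Sum>i<L. \<Sum>k\<in>{k\<in>{..<L}. k < i}. h k i)"
    using sum.swap_restrict[of "{..<L}" "{..<L}" h "\<lambda>k i. k < i"] by simp
  also have "\<dots> = (\<Sum>i<L. \<Sum>k<i. h k i)"
    by (rule sum.cong[OF refl]) (rule sum.cong, auto)
  finally show ?thesis .
qed

end


lemma row_rev1: "(\<Sum>j<n. (E::int\<Rightarrow>'a::comm_ring_1) (b*(int j + 1 - int n))) = (\<Sum>j<n. E (-(b*int j)))"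
proof -
  have "(\<Sum>j<n. E (-(b*int j))) = (\<Sum>j<n. E (-(b*int (n - Suc j))))"
    by (rule sum.nat_diff_reindex[symmetric])
  also have "\<dots> = (\<Sum>j<n. E (b*(int j + 1 - int n)))"
    by (rule sum.cong[OF refl]) (auto simp: of_nat_diff algebra_simps)
  finally show ?thesis by simp
qed

lemma row_rev2: "(\<Sum>j<n. (E::int\<Rightarrow>'a::comm_ring_1) (b*(int n - int j))) = (\<Sum>j<n. E (b*(int j + 1)))"
proof -
  have "(\<Sum>j<n. E (b*(int j + 1))) = (\<Sum>j<n. E (b*(int (n - Suc j) + 1)))"
    by (rule sum.nat_diff_reindex[symmetric])
  also have "\<dots> = (\<Sum>j<n. E (b*(int n - int j)))"
    by (rule sum.cong[OF refl]) (auto simp: of_nat_diff algebra_simps)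
  finally show ?thesis by simp
qed

lemma dsum2:
  fixes x :: "'a::comm_ring_1"
  shows "x * ((\<Sum>k\<in>K. \<Sum>i\<in>I k. A k i) - (\<Sum>k\<in>K. \<Sum>i\<in>I k. B k i)) = (\<Sum>k\<in>K. \<Sum>i\<in>I k. x * (A k i - B k i))"
  by (simp add: right_diff_distrib sum_subtractf sum_distrib_left)

locale rc = rows + chr
begin

lemma D_decomp:
  "(\<Sum>i<L. \<Sum>j<c i. E (a*(int (l j) - int i) + b*(int j + 1 - int (c i))))
   = (\<Sum>i<L. \<Sum>j<c i. E (-(b*int j)))
     + (E a - 1) * (\<Sum>k<L. \<Sum>i\<in>{..k}. \<Sum>j<c k. E (a*(int k - int i) + b*(int j + 1 - int (c i))))"
proof -
  have t: "E (a*(int (l j) - int i) + b*(int j + 1 - int (c i)))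
     = E (b*(int j + 1 - int (c i))) + (E a - 1) * (\<Sum>k\<in>{i..<l j}. E (a*(int k - int i) + b*(int j + 1 - int (c i))))"
    if "i < L" "j < c i" for i j
  proof -
    have il: "i \<le> l j" using H1[of i j] that by simp
    have "E (a*(int (l j) - int i) + b*(int j + 1 - int (c i))) = E (a*(int (l j) - int i)) * E (b*(int j + 1 - int (c i)))"
      by (rule Eeq) simp
    also have "\<dots> = (1 + (E a - 1) * (\<Sum>k\<in>{i..<l j}. E (a*(int k - int i)))) * E (b*(int j + 1 - int (c i)))"
      using TA[OF il] by simp
    also have "\<dots> = E (b*(int j + 1 - int (c i))) + (E a - 1) * (\<Sum>k\<in>{i..<l j}. E (a*(int k - int i)) * E (b*(int j + 1 - int (c i))))"
      by (simp only: sum_distrib_right[symmetric]) (simp add: algebra_simps)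
    also have "(\<Sum>k\<in>{i..<l j}. E (a*(int k - int i)) * E (b*(int j + 1 - int (c i)))) = (\<Sum>k\<in>{i..<l j}. E (a*(int k - int i) + b*(int j + 1 - int (c i))))"
      by (rule sum.cong[OF refl]) (rule Eeq[symmetric], simp)
    finally show ?thesis .
  qed
  have "(\<Sum>i<L. \<Sum>j<c i. E (a*(int (l j) - int i) + b*(int j + 1 - int (c i))))
     = (\<Sum>i<L. \<Sum>j<c i. E (b*(int j + 1 - int (c i))) + (E a - 1) * (\<Sum>k\<in>{i..<l j}. E (a*(int k - int i) + b*(int j + 1 - int (c i)))))"
    using t by (intro sum.cong refl) auto
  also have "\<dots> = (\<Sum>i<L. \<Sum>j<c i. E (b*(int j + 1 - int (c i)))) + (E a - 1) * (\<Sum>i<L. \<Sum>j<c i. \<Sum>k\<in>{i..<l j}. E (a*(int k - int i) + b*(int j + 1 - int (c i))))"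
    by (simp add: sum.distrib sum_distrib_left)
  also have "(\<Sum>i<L. \<Sum>j<c i. E (b*(int j + 1 - int (c i)))) = (\<Sum>i<L. \<Sum>j<c i. E (-(b*int j)))"
    by (rule sum.cong[OF refl]) (rule row_rev1)
  also have "(\<Sum>i<L. \<Sum>j<c i. \<Sum>k\<in>{i..<l j}. E (a*(int k - int i) + b*(int j + 1 - int (c i))))
      = (\<Sum>k<L. \<Sum>i\<in>{..k}. \<Sum>j<c k. E (a*(int k - int i) + b*(int j + 1 - int (c i))))"
    by (rule R_D)
  finally show ?thesis .
qed


lemma E3: "x = y + z + w \<Longrightarrow> E x = E y * E z * E w"
  using E_add by simp

lemma U_decomp:
  "(\<Sum>i<L. \<Sum>j<c i. E (a*(int i + 1 - int (l j)) + b*(int (c i) - int j)))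
   = (\<Sum>i<L. \<Sum>j<c i. E (b*(int j + 1)))
     + (1 - E a) * (\<Sum>k<L. \<Sum>i<k. \<Sum>j<c k. E (a*(int i - int k) + b*(int (c i) - int j)))"
proof -
  have t: "E (a*(int i + 1 - int (l j)) + b*(int (c i) - int j))
     = E (b*(int (c i) - int j)) + (1 - E a) * (\<Sum>k\<in>{i<..<l j}. E (a*(int i - int k) + b*(int (c i) - int j)))"
    if "i < L" "j < c i" for i j
  proof -
    have il: "i < l j" using H1[of i j] that by simp
    have "E (a*(int i + 1 - int (l j)) + b*(int (c i) - int j)) = E (a*(int i + 1 - int (l j))) * E (b*(int (c i) - int j))"
      by (rule Eeq) simp
    also have "\<dots> = (1 + (1 - E a) * (\<Sum>k\<in>{i<..<l j}. E (a*(int i - int k)))) * E (b*(int (c i) - int j))"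
      using TB[OF il] by simp
    also have "\<dots> = E (b*(int (c i) - int j)) + (1 - E a) * (\<Sum>k\<in>{i<..<l j}. E (a*(int i - int k)) * E (b*(int (c i) - int j)))"
      by (simp only: sum_distrib_right[symmetric]) (simp add: algebra_simps)
    also have "(\<Sum>k\<in>{i<..<l j}. E (a*(int i - int k)) * E (b*(int (c i) - int j))) = (\<Sum>k\<in>{i<..<l j}. E (a*(int i - int k) + b*(int (c i) - int j)))"
      by (rule sum.cong[OF refl]) (rule Eeq[symmetric], simp)
    finally show ?thesis .
  qed
  have "(\<Sum>i<L. \<Sum>j<c i. E (a*(int i + 1 - int (l j)) + b*(int (c i) - int j)))
     = (\<Sum>i<L. \<Sum>j<c i. E (b*(int (c i) - int j)) + (1 - E a) * (\<Sum>k\<in>{i<..<l j}. E (a*(int i - int k) + b*(int (c i) - int j))))"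
    using t by (intro sum.cong refl) auto
  also have "\<dots> = (\<Sum>i<L. \<Sum>j<c i. E (b*(int (c i) - int j))) + (1 - E a) * (\<Sum>i<L. \<Sum>j<c i. \<Sum>k\<in>{i<..<l j}. E (a*(int i - int k) + b*(int (c i) - int j)))"
    by (simp add: sum.distrib sum_distrib_left)
  also have "(\<Sum>i<L. \<Sum>j<c i. E (b*(int (c i) - int j))) = (\<Sum>i<L. \<Sum>j<c i. E (b*(int j + 1)))"
    by (rule sum.cong[OF refl]) (rule row_rev2)
  also have "(\<Sum>i<L. \<Sum>j<c i. \<Sum>k\<in>{i<..<l j}. E (a*(int i - int k) + b*(int (c i) - int j)))
      = (\<Sum>k<L. \<Sum>i<k. \<Sum>j<c k. E (a*(int i - int k) + b*(int (c i) - int j)))"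
    by (rule R_U)
  finally show ?thesis .
qed

lemma R1_lem:
  "(E a - 1) * (\<Sum>k<L. \<Sum>i\<in>{..k}. \<Sum>j<c k. E (a*(int k - int i) + b*(int j + 1)))
   = (\<Sum>i<L. \<Sum>j<c i. E (a*(int i + 1) + b*(int j + 1))) - (\<Sum>i<L. \<Sum>j<c i. E (b*(int j + 1)))"
proof -
  have "(E a - 1) * (\<Sum>k<L. \<Sum>i\<in>{..k}. \<Sum>j<c k. E (a*(int k - int i) + b*(int j + 1)))
     = (\<Sum>k<L. \<Sum>j<c k. ((E a - 1) * (\<Sum>i\<in>{..k}. E (a*(int k - int i)))) * E (b*(int j + 1)))"
  proof -
    have "\<And>k. (\<Sum>i\<in>{..k}. \<Sum>j<c k. E (a*(int k - int i) + b*(int j + 1)))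
       = (\<Sum>j<c k. (\<Sum>i\<in>{..k}. E (a*(int k - int i))) * E (b*(int j + 1)))"
      by (subst sum.swap) (simp add: sum_distrib_right Eeq)
    then show ?thesis by (simp add: sum_distrib_left algebra_simps)
  qed
  also have "\<dots> = (\<Sum>k<L. \<Sum>j<c k. E (a*(int k + 1) + b*(int j + 1)) - E (b*(int j + 1)))"
    by (simp only: TD1) (simp add: algebra_simps Eeq)
  also have "\<dots> = (\<Sum>i<L. \<Sum>j<c i. E (a*(int i + 1) + b*(int j + 1))) - (\<Sum>i<L. \<Sum>j<c i. E (b*(int j + 1)))"
    by (simp add: sum_subtractf)
  finally show ?thesis .
qed

lemma R2_lem:
  "(1 - E a) * (\<Sum>i<L. \<Sum>k<i. \<Sum>j<c i. E (a*(int k - int i) - b*int j))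
   = (\<Sum>i<L. \<Sum>j<c i. E (-(a*int i + b*int j))) - (\<Sum>i<L. \<Sum>j<c i. E (-(b*int j)))"
proof -
  have "(1 - E a) * (\<Sum>i<L. \<Sum>k<i. \<Sum>j<c i. E (a*(int k - int i) - b*int j))
     = (\<Sum>i<L. \<Sum>j<c i. ((1 - E a) * (\<Sum>k<i. E (a*(int k - int i)))) * E (-(b*int j)))"
  proof -
    have "\<And>i. (\<Sum>k<i. \<Sum>j<c i. E (a*(int k - int i) - b*int j))
       = (\<Sum>j<c i. (\<Sum>k<i. E (a*(int k - int i))) * E (-(b*int j)))"
    proof -
      have ee: "\<And>i k j. E (a*(int k - int i) - b*int j) = E (a*(int k - int i)) * E (-(b*int j))"
        by (rule Eeq) simp
      show "\<And>i. ?thesis i" by (subst sum.swap) (simp add: sum_distrib_right ee)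
    qed
    then show ?thesis by (simp add: sum_distrib_left algebra_simps)
  qed
  also have "\<dots> = (\<Sum>i<L. \<Sum>j<c i. E (-(a*int i + b*int j)) - E (-(b*int j)))"
  proof -
    have ee2: "\<And>i j. E (- (a*int i)) * E (-(b*int j)) = E (-(a*int i + b*int j))"
      by (rule Eeq[symmetric]) simp
    show ?thesis by (simp only: TD2) (simp only: left_diff_distrib mult_1_left ee2)
  qed
  also have "\<dots> = (\<Sum>i<L. \<Sum>j<c i. E (-(a*int i + b*int j))) - (\<Sum>i<L. \<Sum>j<c i. E (-(b*int j)))"
    by (simp add: sum_subtractf)
  finally show ?thesis .
qed


lemma P_decomp:
  "- ((1 - E a) * (1 - E b) * ((\<Sum>i<L. \<Sum>j<c i. E (a*int i + b*int j)) * (\<Sum>i<L. \<Sum>j<c i. E (-(a*int i + b*int j)))))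
   = (E a - 1) * ((\<Sum>k<L. \<Sum>i\<in>{..k}. \<Sum>j<c k. E (a*(int k - int i) + b*(int j + 1 - int (c i))))
                   - (\<Sum>k<L. \<Sum>i\<in>{..k}. \<Sum>j<c k. E (a*(int k - int i) + b*(int j + 1))))
   + (1 - E a) * ((\<Sum>i<L. \<Sum>k<i. \<Sum>j<c i. E (a*(int k - int i) + b*(int (c k) - int j)))
                   - (\<Sum>i<L. \<Sum>k<i. \<Sum>j<c i. E (a*(int k - int i) - b*int j)))"
proof -
  define Sk where "Sk k = (\<Sum>j<c k. E (b*int j))" for k
  define Sb where "Sb i = (\<Sum>j<c i. E (-(b*int j)))" for i
  define h where "h k i = - ((1 - E a) * (1 - E b) * (E (a*(int k - int i)) * (Sk k * Sb i)))" for k i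
  have Q: "(\<Sum>i<L. \<Sum>j<c i. E (a*int i + b*int j)) = (\<Sum>k<L. E (a*int k) * Sk k)"
    by (simp add: Sk_def sum_distrib_left E_add)
  have ee: "\<And>i j. E (-(a*int i + b*int j)) = E (-(a*int i)) * E (-(b*int j))"
    by (rule Eeq) simp
  have Qb: "(\<Sum>i<L. \<Sum>j<c i. E (-(a*int i + b*int j))) = (\<Sum>i<L. E (-(a*int i)) * Sb i)"
    by (simp only: Sb_def sum_distrib_left ee)
  have ee2: "\<And>k i. E (a*int k) * E (-(a*int i)) = E (a*(int k - int i))"
    by (rule Eeq[symmetric]) (simp add: algebra_simps)
  have "(\<Sum>k<L. E (a*int k) * Sk k) * (\<Sum>i<L. E (-(a*int i)) * Sb i)
      = (\<Sum>k<L. \<Sum>i<L. E (a*(int k - int i)) * (Sk k * Sb i))"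
    unfolding sum_product by (intro sum.cong refl) (subst ee2[symmetric], simp only: mult_ac)
  then have "- ((1 - E a) * (1 - E b) * ((\<Sum>i<L. \<Sum>j<c i. E (a*int i + b*int j)) * (\<Sum>i<L. \<Sum>j<c i. E (-(a*int i + b*int j)))))
      = (\<Sum>k<L. \<Sum>i<L. h k i)"
    unfolding Q Qb h_def by (simp add: sum_distrib_left sum_negf)
  also have "\<dots> = (\<Sum>k<L. \<Sum>i\<in>{..k}. h k i) + (\<Sum>i<L. \<Sum>k<i. h k i)"
    by (rule pair_split)
  also have "(\<Sum>k<L. \<Sum>i\<in>{..k}. h k i) = (\<Sum>k<L. \<Sum>i\<in>{..k}. (E a - 1) * ((\<Sum>j<c k. E (a*(int k - int i) + b*(int j + 1 - int (c i)))) - (\<Sum>j<c k. E (a*(int k - int i) + b*(int j + 1)))))"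
  proof (intro sum.cong refl)
    fix k i
    have s1: "(\<Sum>j<c k. E (a*(int k - int i) + b*(int j + 1 - int (c i)))) = E (a*(int k - int i)) * Sk k * E (b*(1 - int (c i)))"
      unfolding Sk_def sum_distrib_left sum_distrib_right
      by (intro sum.cong refl) (rule E3, simp add: algebra_simps)
    have s2: "(\<Sum>j<c k. E (a*(int k - int i) + b*(int j + 1))) = E (a*(int k - int i)) * Sk k * E b"
      unfolding Sk_def sum_distrib_left sum_distrib_right
      by (intro sum.cong refl) (rule E3, simp add: algebra_simps)
    have tc: "(1 - E b) * Sb i = E (b * (1 - int (c i))) - E b" unfolding Sb_def by (rule TC)
    have "h k i = (E a - 1) * (E (a*(int k - int i)) * Sk k) * ((1 - E b) * Sb i)"
      unfolding h_def by (simp add: algebra_simps)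
    also have "\<dots> = (E a - 1) * (E (a*(int k - int i)) * Sk k * E (b*(1 - int (c i))) - E (a*(int k - int i)) * Sk k * E b)"
      unfolding tc by (simp add: algebra_simps)
    finally show "h k i = (E a - 1) * ((\<Sum>j<c k. E (a*(int k - int i) + b*(int j + 1 - int (c i)))) - (\<Sum>j<c k. E (a*(int k - int i) + b*(int j + 1))))"
      unfolding s1 s2 .
  qed
  also have "(\<Sum>i<L. \<Sum>k<i. h k i) = (\<Sum>i<L. \<Sum>k<i. (1 - E a) * ((\<Sum>j<c i. E (a*(int k - int i) + b*(int (c k) - int j))) - (\<Sum>j<c i. E (a*(int k - int i) - b*int j))))"
  proof (intro sum.cong refl)
    fix k i
    have s1: "(\<Sum>j<c i. E (a*(int k - int i) + b*(int (c k) - int j))) = E (a*(int k - int i)) * Sb i * E (b*int (c k))"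
      unfolding Sb_def sum_distrib_left sum_distrib_right
      by (intro sum.cong refl) (rule E3, simp add: algebra_simps)
    have s2: "(\<Sum>j<c i. E (a*(int k - int i) - b*int j)) = E (a*(int k - int i)) * Sb i"
      unfolding Sb_def sum_distrib_left
      by (intro sum.cong refl) (rule Eeq, simp add: algebra_simps)
    have tc: "(1 - E b) * Sk k = 1 - E (b * int (c k))" unfolding Sk_def by (rule TC')
    have "h k i = - ((1 - E a) * (E (a*(int k - int i)) * Sb i) * ((1 - E b) * Sk k))"
      unfolding h_def by (simp add: algebra_simps)
    also have "\<dots> = (1 - E a) * (E (a*(int k - int i)) * Sb i * E (b*int (c k)) - E (a*(int k - int i)) * Sb i)"
      unfolding tc by (simp add: algebra_simps)
    finally show "h k i = (1 - E a) * ((\<Sum>j<c i. E (a*(int k - int i) + b*(int (c k) - int j))) - (\<Sum>j<c i. E (a*(int k - int i) - b*int j)))"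
      unfolding s1 s2 .
  qed
  finally have calc: "- ((1 - E a) * (1 - E b) * ((\<Sum>i<L. \<Sum>j<c i. E (a*int i + b*int j)) * (\<Sum>i<L. \<Sum>j<c i. E (-(a*int i + b*int j))))) =
    (\<Sum>k<L. \<Sum>i\<in>{..k}. (E a - 1) * ((\<Sum>j<c k. E (a*(int k - int i) + b*(int j + 1 - int (c i)))) - (\<Sum>j<c k. E (a*(int k - int i) + b*(int j + 1)))))
    + (\<Sum>i<L. \<Sum>k<i. (1 - E a) * ((\<Sum>j<c i. E (a*(int k - int i) + b*(int (c k) - int j))) - (\<Sum>j<c i. E (a*(int k - int i) - b*int j))))" .
  have e1: "(E a - 1) * ((\<Sum>k<L. \<Sum>i\<in>{..k}. \<Sum>j<c k. E (a*(int k - int i) + b*(int j + 1 - int (c i))))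
                   - (\<Sum>k<L. \<Sum>i\<in>{..k}. \<Sum>j<c k. E (a*(int k - int i) + b*(int j + 1))))
    = (\<Sum>k<L. \<Sum>i\<in>{..k}. (E a - 1) * ((\<Sum>j<c k. E (a*(int k - int i) + b*(int j + 1 - int (c i)))) - (\<Sum>j<c k. E (a*(int k - int i) + b*(int j + 1)))))"
    by (rule dsum2)
  have e2: "(1 - E a) * ((\<Sum>i<L. \<Sum>k<i. \<Sum>j<c i. E (a*(int k - int i) + b*(int (c k) - int j)))
                   - (\<Sum>i<L. \<Sum>k<i. \<Sum>j<c i. E (a*(int k - int i) - b*int j)))
    = (\<Sum>i<L. \<Sum>k<i. (1 - E a) * ((\<Sum>j<c i. E (a*(int k - int i) + b*(int (c k) - int j))) - (\<Sum>j<c i. E (a*(int k - int i) - b*int j))))"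
    by (rule dsum2)
  show ?thesis unfolding e1 e2 by (rule calc)
qed

lemma alg:
  fixes X Y :: "'b::comm_ring_1"
  assumes "d = A0 + (X-1)*T1" "u = B0 + (1-X)*T2"
    "- ((1-X)*(1-Y)*P) = (X-1)*(T1-R1) + (1-X)*(T2-R2)"
    "(X-1)*R1 = Q1 - B0" "(1-X)*R2 = Qb - A0"
  shows "d + u = Qb + Q1 - (1-X)*(1-Y)*P"
proof -
  have "(X-1)*(T1-R1) = (X-1)*T1 - (Q1 - B0)" using assms(4) by (simp add: right_diff_distrib)
  moreover have "(1-X)*(T2-R2) = (1-X)*T2 - (Qb - A0)" using assms(5) by (simp add: right_diff_distrib)
  ultimately have pp: "(1-X)*(1-Y)*P = - ((X-1)*T1 - (Q1 - B0) + ((1-X)*T2 - (Qb - A0)))"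
    using assms(3) by (metis minus_minus)
  have "d + u - (Qb + Q1 - (1-X)*(1-Y)*P) = 0"
    unfolding assms(1,2) pp by (simp add: algebra_simps)
  then show ?thesis by simp
qed

theorem hook_identity:
  "(\<Sum>i<L. \<Sum>j<c i. E (a*(int (l j) - int i) + b*(int j + 1 - int (c i))))
   + (\<Sum>i<L. \<Sum>j<c i. E (a*(int i + 1 - int (l j)) + b*(int (c i) - int j)))
   = (\<Sum>i<L. \<Sum>j<c i. E (-(a*int i + b*int j))) + (\<Sum>i<L. \<Sum>j<c i. E (a*(int i + 1) + b*(int j + 1)))
     - (1 - E a) * (1 - E b) * ((\<Sum>i<L. \<Sum>j<c i. E (a*int i + b*int j)) * (\<Sum>i<L. \<Sum>j<c i. E (-(a*int i + b*int j))))"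
  apply (rule alg)
  apply (rule D_decomp)
  apply (rule U_decomp)
  apply (rule P_decomp)
  apply (rule R1_lem)
  apply (rule R2_lem)
  done

end


lemma downset_nat:
  assumes "finite (S::nat set)" "\<And>x y. x \<in> S \<Longrightarrow> y \<le> x \<Longrightarrow> y \<in> S"
  shows "S = {..<card S}"
proof (cases "S = {}")
  case True then show ?thesis by simp
next
  case False
  have "S = {..Max S}"
  proof
    show "S \<subseteq> {..Max S}" using Max_ge[OF assms(1)] by auto
    show "{..Max S} \<subseteq> S" using Max_in[OF assms(1) False] assms(2) by auto
  qed
  then show ?thesis by (metis card_atMost lessThan_Suc_atMost)
qed

lemma young_row:
  assumes "young_diagram lam"
  shows "(i,j) \<in> lam \<longleftrightarrow> j < crow lam i"
proof -
  have fin: "finite lam" using assms unfolding young_diagram_def by blast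
  have "{j. (i,j) \<in> lam} \<subseteq> snd ` lam" by force
  then have f: "finite {j. (i,j) \<in> lam}" using fin finite_subset by blast
  have "{j. (i,j) \<in> lam} = {..<card {j. (i,j) \<in> lam}}"
  proof (rule downset_nat[OF f])
    fix x y assume "x \<in> {j. (i,j) \<in> lam}" "y \<le> x"
    then show "y \<in> {j. (i,j) \<in> lam}" using assms unfolding young_diagram_def
      by (metis mem_Collect_eq order_refl)
  qed
  then show ?thesis unfolding crow_def by (metis lessThan_iff mem_Collect_eq)
qed

lemma young_col:
  assumes "young_diagram lam"
  shows "(i,j) \<in> lam \<longleftrightarrow> i < lcol lam j"
proof -
  have fin: "finite lam" using assms unfolding young_diagram_def by blast
  have "{i. (i,j) \<in> lam} \<subseteq> fst ` lam" by force
  then have f: "finite {i. (i,j) \<in> lam}" using fin finite_subset by blast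
  have "{i. (i,j) \<in> lam} = {..<card {i. (i,j) \<in> lam}}"
  proof (rule downset_nat[OF f])
    fix x y assume "x \<in> {i. (i,j) \<in> lam}" "y \<le> x"
    then show "y \<in> {i. (i,j) \<in> lam}" using assms unfolding young_diagram_def
      by (metis mem_Collect_eq order_refl)
  qed
  then show ?thesis unfolding lcol_def by (metis lessThan_iff mem_Collect_eq)
qed

lemma young_rows:
  assumes "young_diagram lam"
  shows "rows (crow lam) (lcol lam) (lcol lam 0)"
  unfolding rows_def
proof (intro allI)
  fix k j
  have z: "(k,j) \<in> lam \<Longrightarrow> (k,0) \<in> lam" using assms unfolding young_diagram_def by blast
  have r: "(k,j) \<in> lam \<longleftrightarrow> j < crow lam k" by (rule young_row[OF assms])
  have c: "(k,j) \<in> lam \<longleftrightarrow> k < lcol lam j" by (rule young_col[OF assms])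
  have c0: "(k,0) \<in> lam \<longleftrightarrow> k < lcol lam 0" by (rule young_col[OF assms])
  show "k < lcol lam j \<longleftrightarrow> (k < lcol lam 0 \<and> j < crow lam k)"
    using z r c c0 by blast
qed

lemma young_sum:
  assumes "young_diagram lam"
  shows "sum f lam = (\<Sum>i<lcol lam 0. \<Sum>j<crow lam i. f (i,j))"
proof -
  have "lam = Sigma {..<lcol lam 0} (\<lambda>i. {..<crow lam i})"
  proof (rule set_eqI)
    fix x :: "nat \<times> nat"
    obtain k j where x: "x = (k,j)" by (cases x)
    have "k < lcol lam j \<longleftrightarrow> (k < lcol lam 0 \<and> j < crow lam k)"
      using young_rows[OF assms] unfolding rows_def by blast
    then show "x \<in> lam \<longleftrightarrow> x \<in> Sigma {..<lcol lam 0} (\<lambda>i. {..<crow lam i})"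
      unfolding x using young_col[OF assms, of k j] by simp
  qed
  then have "sum f lam = sum f (Sigma {..<lcol lam 0} (\<lambda>i. {..<crow lam i}))" by simp
  also have "\<dots> = (\<Sum>i<lcol lam 0. \<Sum>j<crow lam i. f (i,j))"
    by (subst sum.Sigma) auto
  finally show ?thesis .
qed


lemma rou:
  assumes "n > 0"
  shows "(\<Sum>m<n. cis (2*pi*real m*of_int u/real n)) = (if int n dvd u then of_nat n else 0)"
proof -
  define w where "w = cis (2*pi*of_int u/real n)"
  have pw: "cis (2*pi*real m*of_int u/real n) = w^m" for m
    unfolding w_def DeMoivre by (rule arg_cong[where f=cis]) simp
  have wn: "w^n = 1"
  proof -
    have "w^n = cis (2*pi*of_int u)" unfolding w_def DeMoivre using assms
      by (intro arg_cong[where f=cis]) (simp add: field_simps)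
    also have "\<dots> = 1" by (rule cis_multiple_2pi) simp
    finally show ?thesis .
  qed
  show ?thesis
  proof (cases "int n dvd u")
    case True
    then obtain q where q: "u = int n * q" by blast
    have "w = cis (2*pi*of_int q)" unfolding w_def q using assms
      by (intro arg_cong[where f=cis]) (simp add: field_simps)
    also have "\<dots> = 1" by (rule cis_multiple_2pi) simp
    finally have "w = 1" .
    then show ?thesis using True by (simp add: pw)
  next
    case False
    have "w \<noteq> 1"
    proof
      assume "w = 1"
      then obtain k where k: "2*pi*of_int u/real n = of_int k * (2*pi)"
        unfolding w_def cis_eq_1_iff by blast
      then have "real_of_int u = of_int k * real n" using assms
        by (simp add: field_simps)
      then have "u = k * int n" by (metis of_int_eq_iff of_int_mult of_int_of_nat_eq)
      then show False using False by simp
    qed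
    then show ?thesis using False by (simp add: pw sum_gp_strict wn)
  qed
qed


definition Em :: "nat \<Rightarrow> nat \<Rightarrow> int \<Rightarrow> complex" where
  "Em n m u = cis (2*pi*real m*of_int u/real n)"

lemma Em_chr: "chr (Em n m)"
proof
  fix u v
  show "Em n m (u + v) = Em n m u * Em n m v"
    unfolding Em_def cis_mult by (rule arg_cong[where f=cis]) (simp add: algebra_simps add_divide_distrib)
next
  show "Em n m 0 = 1" unfolding Em_def by simp
qed

lemma Em_zero: "Em n 0 u = 1" unfolding Em_def by simp

lemma Em_mod:
  assumes "n > 0"
  shows "Em n m u = Em n m (u mod int n)"
proof -
  have "Em n m u = Em n m (u mod int n) * Em n m (int n * (u div int n))"
    by (rule chr.Eeq[OF Em_chr]) simp
  moreover have "Em n m (int n * (u div int n)) = 1"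
  proof -
    have "Em n m (int n * (u div int n)) = cis (2*pi*(of_int (int m * (u div int n))))"
      unfolding Em_def using assms by (intro arg_cong[where f=cis]) (simp add: field_simps)
    also have "\<dots> = 1" by (rule cis_multiple_2pi) simp
    finally show ?thesis .
  qed
  ultimately show ?thesis by simp
qed

lemma Em_cnj: "Em n m (-u) = cnj (Em n m u)"
  unfolding Em_def cis_cnj by (rule arg_cong[where f=cis]) simp

lemma count_rou:
  assumes "n > 0" "finite S"
  shows "of_nat (n * card {x\<in>S. int n dvd e x}) = (\<Sum>m<n. \<Sum>x\<in>S. Em n m (e x))"
proof -
  have "(\<Sum>m<n. \<Sum>x\<in>S. Em n m (e x)) = (\<Sum>x\<in>S. \<Sum>m<n. Em n m (e x))"
    by (rule sum.swap)
  also have "\<dots> = (\<Sum>x\<in>S. if int n dvd e x then of_nat n else 0)"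
  proof (rule sum.cong[OF refl])
    fix x
    have "(\<Sum>m<n. Em n m (e x)) = (\<Sum>m<n. cis (2*pi*real m*of_int (e x)/real n))"
      unfolding Em_def ..
    also have "\<dots> = (if int n dvd e x then of_nat n else 0)" by (rule rou[OF assms(1)])
    finally show "(\<Sum>m<n. Em n m (e x)) = (if int n dvd e x then of_nat n else 0)" .
  qed
  also have "\<dots> = (\<Sum>x\<in>{x\<in>S. int n dvd e x}. of_nat n)"
    by (rule sum.inter_filter[symmetric]) (rule assms(2))
  also have "\<dots> = of_nat (n * card {x\<in>S. int n dvd e x})"
    by (simp add: mult.commute)
  finally show ?thesis by simp
qed

lemma balanced_vanish:
  assumes "n > 0" "0 < m" "m < n" "balanced a b n r lam" "finite lam"
  shows "(\<Sum>x\<in>lam. Em n m (a*int (fst x) + b*int (snd x))) = 0"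
proof -
  let ?col = "\<lambda>x::nat\<times>nat. (a*int (fst x) + b*int (snd x)) mod int n"
  have "(\<Sum>x\<in>lam. Em n m (a*int (fst x) + b*int (snd x))) = (\<Sum>x\<in>lam. Em n m (?col x))"
    using Em_mod[OF assms(1)] by simp
  also have "\<dots> = (\<Sum>t\<in>{0..<int n}. \<Sum>x\<in>{x. x \<in> lam \<and> ?col x = t}. Em n m (?col x))"
    by (rule sum.group[symmetric]) (use assms(1,5) in auto)
  also have "\<dots> = (\<Sum>t\<in>{0..<int n}. of_nat r * Em n m t)"
  proof (rule sum.cong[OF refl])
    fix t assume t: "t \<in> {0..<int n}"
    have "(\<Sum>x\<in>{x. x \<in> lam \<and> ?col x = t}. Em n m (?col x)) = (\<Sum>x\<in>{x. x \<in> lam \<and> ?col x = t}. Em n m t)"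
      by (rule sum.cong) auto
    also have "\<dots> = of_nat (card {x. x \<in> lam \<and> ?col x = t}) * Em n m t" by simp
    also have "card {x. x \<in> lam \<and> ?col x = t} = r"
      using assms(4) t unfolding balanced_def color_def by auto
    finally show "(\<Sum>x\<in>{x. x \<in> lam \<and> ?col x = t}. Em n m (?col x)) = of_nat r * Em n m t" .
  qed
  also have "\<dots> = of_nat r * (\<Sum>t\<in>{0..<int n}. Em n m t)" by (simp add: sum_distrib_left)
  also have "(\<Sum>t\<in>{0..<int n}. Em n m t) = (\<Sum>t<n. Em n m (int t))"
  proof -
    have "{0..<int n} = int ` {0..<n}" by (simp add: image_int_atLeastLessThan)
    also have "{0..<n} = {..<n}" by auto
    finally have "{0..<int n} = int ` {..<n}" .
    then show ?thesis by (simp add: sum.reindex)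
  qed
  also have "\<dots> = (\<Sum>t<n. cis (2*pi*real t*of_int (int m)/real n))"
    unfolding Em_def by (intro sum.cong refl arg_cong[where f=cis]) simp
  also have "\<dots> = 0" using rou[OF assms(1), of "int m"] assms(2,3)
    by (auto dest: zdvd_imp_le)
  finally show ?thesis by simp
qed



definition RHSd :: "(nat\<times>nat) set \<Rightarrow> int \<Rightarrow> int \<Rightarrow> nat \<Rightarrow> nat \<Rightarrow> complex" where
  "RHSd lam a b n m = (\<Sum>i<lcol lam 0. \<Sum>j<crow lam i. Em n m (-(a*int i + b*int j)))
     + (\<Sum>i<lcol lam 0. \<Sum>j<crow lam i. Em n m (a*(int i + 1) + b*(int j + 1)))
     - (1 - Em n m a) * (1 - Em n m b) * ((\<Sum>i<lcol lam 0. \<Sum>j<crow lam i. Em n m (a*int i + b*int j))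
        * (\<Sum>i<lcol lam 0. \<Sum>j<crow lam i. Em n m (-(a*int i + b*int j))))"

lemma testQ:
  assumes "young_diagram lam" "balanced a b n r lam" "0 < m" "m < n"
  shows "(\<Sum>i<lcol lam 0. \<Sum>j<crow lam i. Em n m (a*int i + b*int j)) = 0"
proof -
  have fin: "finite lam" using assms(1) unfolding young_diagram_def by blast
  have n0: "n > 0" using assms by simp
  have "(\<Sum>x\<in>lam. Em n m (a*int (fst x) + b*int (snd x))) = 0"
    using balanced_vanish[OF n0 assms(3,4,2) fin] .
  then show ?thesis unfolding young_sum[OF assms(1)] by simp
qed

lemma Rm:
  assumes "young_diagram lam" "balanced a b n r lam" "0 < m" "m < n"
  shows "RHSd lam a b n m = 0"
proof -
  have Q: "(\<Sum>i<lcol lam 0. \<Sum>j<crow lam i. Em n m (a*int i + b*int j)) = 0"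
    by (rule testQ[OF assms])
  have Qb: "(\<Sum>i<lcol lam 0. \<Sum>j<crow lam i. Em n m (-(a*int i + b*int j))) = 0"
  proof -
    have "(\<Sum>i<lcol lam 0. \<Sum>j<crow lam i. Em n m (-(a*int i + b*int j)))
        = cnj (\<Sum>i<lcol lam 0. \<Sum>j<crow lam i. Em n m (a*int i + b*int j))"
      by (simp only: Em_cnj cnj_sum)
    then show ?thesis using Q by simp
  qed
  have Q1: "(\<Sum>i<lcol lam 0. \<Sum>j<crow lam i. Em n m (a*(int i + 1) + b*(int j + 1))) = Em n m (a + b) * (\<Sum>i<lcol lam 0. \<Sum>j<crow lam i. Em n m (a*int i + b*int j))"
    unfolding sum_distrib_left
    by (intro sum.cong refl) (rule chr.Eeq[OF Em_chr], simp add: algebra_simps)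
  show ?thesis unfolding RHSd_def Q Qb Q1 by simp
qed

lemma R0:
  assumes "young_diagram lam"
  shows "RHSd lam a b n 0 = of_nat (2 * card lam)"
proof -
  have card_sum: "(\<Sum>i<lcol lam 0. \<Sum>j<crow lam i. (1::complex)) = of_nat (card lam)"
    using young_sum[OF assms, of "\<lambda>_. (1::complex)"] by simp
  show ?thesis unfolding RHSd_def Em_zero card_sum by simp
qed


lemma per_m:
  assumes "young_diagram lam"
  shows "(\<Sum>x\<in>lam. Em n m (a*(int (lcol lam (snd x)) - int (fst x)) + b*(int (snd x) + 1 - int (crow lam (fst x)))))
       + (\<Sum>x\<in>lam. Em n m (a*(int (fst x) + 1 - int (lcol lam (snd x))) + b*(int (crow lam (fst x)) - int (snd x))))
       = RHSd lam a b n m"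
proof -
  have rc: "rc (crow lam) (lcol lam) (lcol lam 0) (Em n m)"
    unfolding rc_def using young_rows[OF assms] Em_chr by blast
  show ?thesis unfolding RHSd_def
    by (simp only: young_sum[OF assms] fst_conv snd_conv) (rule rc.hook_identity[OF rc])
qed

lemma setD:
  "{(i, j) \<in> lam. case_prod (invariant_arrow a b n) (d_arrow lam i j)}
   = {x\<in>lam. int n dvd (a*(int (lcol lam (snd x)) - int (fst x)) + b*(int (snd x) + 1 - int (crow lam (fst x))))}"
proof -
  have "\<And>i j. case_prod (invariant_arrow a b n) (d_arrow lam i j) \<longleftrightarrow> int n dvd (a*(int (lcol lam j) - int i) + b*(int j + 1 - int (crow lam i)))"
  proof -
    fix i j
    have e: "a * (int (lcol lam j) - int i) + b * (int j - (int (crow lam i) - 1)) = a*(int (lcol lam j) - int i) + b*(int j + 1 - int (crow lam i))"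
      by (simp add: algebra_simps)
    show "case_prod (invariant_arrow a b n) (d_arrow lam i j) \<longleftrightarrow> int n dvd (a*(int (lcol lam j) - int i) + b*(int j + 1 - int (crow lam i)))"
      unfolding invariant_arrow_def d_arrow_def prod.case fst_conv snd_conv e by (simp add: dvd_eq_mod_eq_0)
  qed
  then show ?thesis by auto
qed

lemma setU:
  "{(i, j) \<in> lam. case_prod (invariant_arrow a b n) (u_arrow lam i j)}
   = {x\<in>lam. int n dvd (a*(int (fst x) + 1 - int (lcol lam (snd x))) + b*(int (crow lam (fst x)) - int (snd x)))}"
proof -
  have "\<And>i j. case_prod (invariant_arrow a b n) (u_arrow lam i j) \<longleftrightarrow> int n dvd (a*(int i + 1 - int (lcol lam j)) + b*(int (crow lam i) - int j))"
  proof -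
    fix i j
    have e: "a * (int i - (int (lcol lam j) - 1)) + b * (int (crow lam i) - int j) = a*(int i + 1 - int (lcol lam j)) + b*(int (crow lam i) - int j)"
      by (simp add: algebra_simps)
    show "case_prod (invariant_arrow a b n) (u_arrow lam i j) \<longleftrightarrow> int n dvd (a*(int i + 1 - int (lcol lam j)) + b*(int (crow lam i) - int j))"
      unfolding invariant_arrow_def u_arrow_def prod.case fst_conv snd_conv e by (simp add: dvd_eq_mod_eq_0)
  qed
  then show ?thesis by auto
qed


theorem corollary2p1:
  fixes r n :: nat and a b :: int and lam :: "(nat \<times> nat) set"
  assumes "r \<ge> 1" and "n \<ge> 1" and "gcd a b = 1"
    and "young_diagram lam" and "card lam = r * n"
    and "balanced a b n r lam"
  shows "card {(i, j) \<in> lam. case_prod (invariant_arrow a b n) (d_arrow lam i j)}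
       + card {(i, j) \<in> lam. case_prod (invariant_arrow a b n) (u_arrow lam i j)} = 2 * r"
proof -
  have n0: "n > 0" using assms(2) by simp
  have fin: "finite lam" using assms(4) unfolding young_diagram_def by blast
  define De where "De = (\<lambda>x::nat\<times>nat. a*(int (lcol lam (snd x)) - int (fst x)) + b*(int (snd x) + 1 - int (crow lam (fst x))))"
  define Ue where "Ue = (\<lambda>x::nat\<times>nat. a*(int (fst x) + 1 - int (lcol lam (snd x))) + b*(int (crow lam (fst x)) - int (snd x)))"
  have sD: "{(i, j) \<in> lam. case_prod (invariant_arrow a b n) (d_arrow lam i j)} = {x\<in>lam. int n dvd De x}"
    unfolding De_def by (rule setD)
  have sU: "{(i, j) \<in> lam. case_prod (invariant_arrow a b n) (u_arrow lam i j)} = {x\<in>lam. int n dvd Ue x}"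
    unfolding Ue_def by (rule setU)
  have pm: "(\<Sum>x\<in>lam. Em n m (De x)) + (\<Sum>x\<in>lam. Em n m (Ue x)) = RHSd lam a b n m" for m
    unfolding De_def Ue_def by (rule per_m[OF assms(4)])
  have total: "(\<Sum>m<n. RHSd lam a b n m) = of_nat (2 * card lam)"
  proof -
    obtain n' where n': "n = Suc n'" using n0 by (cases n) auto
    have "(\<Sum>m<n. RHSd lam a b n m) = RHSd lam a b n 0 + (\<Sum>m<n'. RHSd lam a b n (Suc m))"
      unfolding n' by (rule sum.lessThan_Suc_shift)
    also have "(\<Sum>m<n'. RHSd lam a b n (Suc m)) = 0"
    proof (rule sum.neutral, rule ballI)
      fix m assume "m \<in> {..<n'}"
      then have "0 < Suc m" "Suc m < n" using n' by auto
      then show "RHSd lam a b n (Suc m) = 0" by (rule Rm[OF assms(4,6)])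
    qed
    finally show ?thesis using R0[OF assms(4)] by simp
  qed
  let ?D = "card {x\<in>lam. int n dvd De x}"
  let ?U = "card {x\<in>lam. int n dvd Ue x}"
  have "(of_nat (n * (?D + ?U)) :: complex) = of_nat (n * ?D) + of_nat (n * ?U)"
    by (simp add: distrib_left)
  also have "\<dots> = (\<Sum>m<n. \<Sum>x\<in>lam. Em n m (De x)) + (\<Sum>m<n. \<Sum>x\<in>lam. Em n m (Ue x))"
    unfolding count_rou[OF n0 fin, of De] count_rou[OF n0 fin, of Ue] ..
  also have "\<dots> = (\<Sum>m<n. (\<Sum>x\<in>lam. Em n m (De x)) + (\<Sum>x\<in>lam. Em n m (Ue x)))"
    by (rule sum.distrib[symmetric])
  also have "\<dots> = (\<Sum>m<n. RHSd lam a b n m)"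
    unfolding pm ..
  also have "\<dots> = of_nat (2 * card lam)" by (rule total)
  finally have "n * (?D + ?U) = 2 * card lam" by (simp only: of_nat_eq_iff)
  then have "n * (?D + ?U) = n * (2 * r)" using assms(5) by (simp add: algebra_simps)
  then have "?D + ?U = 2 * r" using n0 by simp
  then show ?thesis unfolding sD sU .
qed


end
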